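(* For each $\Sigma$-tree $X$ there is a pruned tree which is a retract of $X$, and it is unique up to isomorphism: any two pruned retracts of $X$ are isomorphic.
   Context: Let $\Sigma$ be a set. A $\Sigma$-tree is a finite directed graph whose underlying undirected graph is a tree, edges labelled by elements of $\Sigma$, with distinguished start and end vertices such that there is a (possibly empty) directed path from the start vertex to the end vertex. A morphism $X\to Y$ of $\Sigma$-trees maps vertices to vertices and edges to edges, preserving the initial vertex, terminal vertex and label of each edge, and maps the start and end vertices of $X$ to those of $Y$; an isomorphism is a morphism bijective on vertices and edges. A retraction of $X$ is an idempotent morphism $X\to X$; its image (a subtree with the same start and end vertices) is a retract of $X$. $X$ is pruned if it admits no non-identity retraction. *)

theory Defs
  imports Main
begin

record ('v, 'e, 's) sgraph =
  verts :: "'v set"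
  edges :: "'e set"
  src :: "'e \<Rightarrow> 'v"
  tgt :: "'e \<Rightarrow> 'v"
  lab :: "'e \<Rightarrow> 's"
  start :: 'v
  fin :: 'v

inductive uwalk :: "('v, 'e, 's) sgraph \<Rightarrow> 'v \<Rightarrow> 'e list \<Rightarrow> 'v \<Rightarrow> bool" for X where
  unil: "u \<in> verts X \<Longrightarrow> uwalk X u [] u"
| ufwd: "e \<in> edges X \<Longrightarrow> src X e = u \<Longrightarrow> uwalk X (tgt X e) es v \<Longrightarrow> uwalk X u (e # es) v"
| ubwd: "e \<in> edges X \<Longrightarrow> tgt X e = u \<Longrightarrow> uwalk X (src X e) es v \<Longrightarrow> uwalk X u (e # es) v"

inductive dwalk :: "('v, 'e, 's) sgraph \<Rightarrow> 'v \<Rightarrow> 'e list \<Rightarrow> 'v \<Rightarrow> bool" for X where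
  dnil: "u \<in> verts X \<Longrightarrow> dwalk X u [] u"
| dcons: "e \<in> edges X \<Longrightarrow> src X e = u \<Longrightarrow> dwalk X (tgt X e) es v \<Longrightarrow> dwalk X u (e # es) v"

definition wf_sgraph :: "('v, 'e, 's) sgraph \<Rightarrow> bool" where
  "wf_sgraph X \<longleftrightarrow> finite (verts X) \<and> finite (edges X)
     \<and> (\<forall>e\<in>edges X. src X e \<in> verts X \<and> tgt X e \<in> verts X)
     \<and> start X \<in> verts X \<and> fin X \<in> verts X"

text \<open>Underlying undirected multigraph is a tree: nonempty, connected, and without
  cycles (a cycle = nonempty closed walk using pairwise distinct edges; this
  includes loops and pairs of parallel edges).\<close>
definition underlying_tree :: "('v, 'e, 's) sgraph \<Rightarrow> bool" where
  "underlying_tree X \<longleftrightarrow> verts X \<noteq> {}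
     \<and> (\<forall>u\<in>verts X. \<forall>v\<in>verts X. \<exists>es. uwalk X u es v)
     \<and> \<not> (\<exists>u es. es \<noteq> [] \<and> distinct es \<and> uwalk X u es u)"

definition sigma_tree :: "'s set \<Rightarrow> ('v, 'e, 's) sgraph \<Rightarrow> bool" where
  "sigma_tree \<Sigma> X \<longleftrightarrow> wf_sgraph X \<and> underlying_tree X
     \<and> lab X ` edges X \<subseteq> \<Sigma>
     \<and> (\<exists>es. dwalk X (start X) es (fin X))"

definition tree_morphism ::
  "('v, 'e, 's) sgraph \<Rightarrow> ('w, 'f, 's) sgraph \<Rightarrow> ('v \<Rightarrow> 'w) \<Rightarrow> ('e \<Rightarrow> 'f) \<Rightarrow> bool" where
  "tree_morphism X Y fv fe \<longleftrightarrow>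
     (\<forall>v\<in>verts X. fv v \<in> verts Y)
   \<and> (\<forall>e\<in>edges X. fe e \<in> edges Y
        \<and> src Y (fe e) = fv (src X e) \<and> tgt Y (fe e) = fv (tgt X e)
        \<and> lab Y (fe e) = lab X e)
   \<and> fv (start X) = start Y \<and> fv (fin X) = fin Y"

definition tree_iso ::
  "('v, 'e, 's) sgraph \<Rightarrow> ('w, 'f, 's) sgraph \<Rightarrow> ('v \<Rightarrow> 'w) \<Rightarrow> ('e \<Rightarrow> 'f) \<Rightarrow> bool" where
  "tree_iso X Y fv fe \<longleftrightarrow> tree_morphism X Y fv fe
     \<and> bij_betw fv (verts X) (verts Y) \<and> bij_betw fe (edges X) (edges Y)"

definition isomorphic :: "('v, 'e, 's) sgraph \<Rightarrow> ('w, 'f, 's) sgraph \<Rightarrow> bool" where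
  "isomorphic X Y \<longleftrightarrow> (\<exists>fv fe. tree_iso X Y fv fe)"

definition retraction :: "('v, 'e, 's) sgraph \<Rightarrow> ('v \<Rightarrow> 'v) \<Rightarrow> ('e \<Rightarrow> 'e) \<Rightarrow> bool" where
  "retraction X fv fe \<longleftrightarrow> tree_morphism X X fv fe
     \<and> (\<forall>v\<in>verts X. fv (fv v) = fv v) \<and> (\<forall>e\<in>edges X. fe (fe e) = fe e)"

definition image_sub :: "('v, 'e, 's) sgraph \<Rightarrow> ('v \<Rightarrow> 'v) \<Rightarrow> ('e \<Rightarrow> 'e) \<Rightarrow> ('v, 'e, 's) sgraph" where
  "image_sub X fv fe = X\<lparr> verts := fv ` verts X, edges := fe ` edges X \<rparr>"

definition is_retract :: "('v, 'e, 's) sgraph \<Rightarrow> ('v, 'e, 's) sgraph \<Rightarrow> bool" where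
  "is_retract R X \<longleftrightarrow> (\<exists>fv fe. retraction X fv fe \<and> R = image_sub X fv fe)"

definition pruned :: "('v, 'e, 's) sgraph \<Rightarrow> bool" where
  "pruned X \<longleftrightarrow> (\<forall>fv fe. retraction X fv fe \<longrightarrow>
       (\<forall>v\<in>verts X. fv v = v) \<and> (\<forall>e\<in>edges X. fe e = e))"

end

theory Submission
  imports Defs "HOL-Library.FuncSet"
begin

lemma image_sub_simps[simp]:
  "verts (image_sub X f g) = f ` verts X"
  "edges (image_sub X f g) = g ` edges X"
  "src (image_sub X f g) = src X"
  "tgt (image_sub X f g) = tgt X"
  "lab (image_sub X f g) = lab X"
  "start (image_sub X f g) = start X"
  "fin (image_sub X f g) = fin X"
  by (simp_all add: image_sub_def)

lemma morph_comp:
  "tree_morphism X Y a b \<Longrightarrow> tree_morphism Y Z c d \<Longrightarrow> tree_morphism X Z (c \<circ> a) (d \<circ> b)"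
  unfolding tree_morphism_def by auto

lemma morph_pow:
  assumes hm: "tree_morphism X X h he"
  shows "tree_morphism X X (h^^n) (he^^n)"
proof (induction n)
  case 0 then show ?case by (simp add: tree_morphism_def)
next
  case (Suc n)
  have "tree_morphism X X (h \<circ> h^^n) (he \<circ> he^^n)" using morph_comp[OF Suc.IH hm] .
  then show ?case by (simp add: o_def)
qed

lemma retr_fix:
  assumes "retraction X f g"
  shows "\<And>v. v \<in> f ` verts X \<Longrightarrow> f v = v" "\<And>e. e \<in> g ` edges X \<Longrightarrow> g e = e"
  using assms unfolding retraction_def by auto

lemma retr_img_sub:
  assumes "retraction X f g"
  shows "f ` verts X \<subseteq> verts X" "g ` edges X \<subseteq> edges X"
  using assms unfolding retraction_def tree_morphism_def by auto

lemma morph_img: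
  assumes "retraction X f1 e1" "retraction X f2 e2"
  shows "tree_morphism (image_sub X f1 e1) (image_sub X f2 e2) f2 e2"
  using assms unfolding retraction_def tree_morphism_def by fastforce

lemma morph_to_img:
  assumes "retraction X f e"
  shows "tree_morphism X (image_sub X f e) f e"
  using assms unfolding retraction_def tree_morphism_def by fastforce

lemma morph_from_img:
  assumes "tree_morphism A (image_sub X f e) a b" "retraction X f e"
  shows "tree_morphism A X a b"
  using assms retr_img_sub[OF assms(2)] unfolding tree_morphism_def by auto

lemma uwalk_map:
  assumes "tree_morphism X Y f e"
  shows "uwalk X u es v \<Longrightarrow> uwalk Y (f u) (map e es) (f v)"
proof (induction rule: uwalk.induct)
  case (unil u) then show ?case using assms by (auto simp: tree_morphism_def intro: uwalk.unil)
next
  case (ufwd ed u es v) then show ?case using assms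
    by (auto simp: tree_morphism_def intro!: uwalk.ufwd)
next
  case (ubwd ed u es v) then show ?case using assms
    by (auto simp: tree_morphism_def intro!: uwalk.ubwd)
qed

lemma dwalk_map:
  assumes "tree_morphism X Y f e"
  shows "dwalk X u es v \<Longrightarrow> dwalk Y (f u) (map e es) (f v)"
proof (induction rule: dwalk.induct)
  case (dnil u) then show ?case using assms by (auto simp: tree_morphism_def intro: dwalk.dnil)
next
  case (dcons ed u es v) then show ?case using assms
    by (auto simp: tree_morphism_def intro!: dwalk.dcons)
qed

lemma uwalk_sub:
  assumes "retraction X f g"
  shows "uwalk (image_sub X f g) u es v \<Longrightarrow> uwalk X u es v"
proof (induction rule: uwalk.induct)
  case (unil u) then show ?case using retr_img_sub[OF assms] by (auto intro: uwalk.unil)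
next
  case (ufwd ed u es v) then show ?case using retr_img_sub[OF assms]
    by (auto intro!: uwalk.ufwd)
next
  case (ubwd ed u es v) then show ?case using retr_img_sub[OF assms]
    by (auto intro!: uwalk.ubwd)
qed

lemma idem_pow:
  assumes "finite A" "\<forall>x\<in>A. h x \<in> A"
  shows "\<exists>m>0. \<forall>x\<in>A. (h^^m) ((h^^m) x) = (h^^m) x"
proof -
  have mapsto: "\<forall>x\<in>A. (h^^n) x \<in> A" for n
    by (induction n) (use assms(2) in auto)
  define F where "F n = restrict (h^^n) A" for n
  have "range F \<subseteq> PiE A (\<lambda>_. A)" using mapsto by (auto simp: F_def)
  hence "finite (range F)" using finite_PiE[OF assms(1), of "\<lambda>_. A"] assms(1)
    by (meson finite_subset)
  hence "\<not> inj F" using infinite_UNIV_nat finite_imageD by blast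
  then obtain i j where ij: "i \<noteq> j" "F i = F j" unfolding inj_def by blast
  then obtain i j where ij: "i < j" "F i = F j"
    by (metis linorder_neqE_nat)
  hence eqij: "\<forall>x\<in>A. (h^^i) x = (h^^j) x"
    unfolding F_def by (metis restrict_apply')
  define p where "p = j - i"
  have pp: "p > 0" using ij p_def by simp
  have step: "(h^^(t + i + p)) x = (h^^(t + i)) x" if "x \<in> A" for t x
  proof -
    have "(h^^(t + i + p)) x = (h^^t) ((h^^j) x)" using ij p_def
      by (simp add: funpow_add)
    also have "\<dots> = (h^^t) ((h^^i) x)" using eqij that by simp
    also have "\<dots> = (h^^(t + i)) x" by (simp add: funpow_add)
    finally show ?thesis .
  qed
  have multk: "(h^^(t + i + k * p)) x = (h^^(t + i)) x" if "x \<in> A" for t k x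
  proof (induction k)
    case 0 then show ?case by simp
  next
    case (Suc k)
    have "(h^^(t + i + Suc k * p)) x = (h^^((t + k*p) + i + p)) x" by (simp add: algebra_simps)
    also have "\<dots> = (h^^((t + k*p) + i)) x" using step that by blast
    also have "\<dots> = (h^^(t + i + k * p)) x" by (simp add: algebra_simps)
    finally show ?case using Suc by simp
  qed
  define m where "m = (i+1)*p"
  have "i*1 \<le> i*p" using pp by (intro mult_le_mono2) simp
  moreover have "m = p + i*p" by (simp add: m_def)
  ultimately have "m \<ge> i" by linarith
  have "m > 0" using pp by (simp add: m_def)
  moreover have "\<forall>x\<in>A. (h^^m) ((h^^m) x) = (h^^m) x"
  proof
    fix x assume x: "x \<in> A"
    have mm: "m + m = (m - i) + i + (i+1)*p" using \<open>m \<ge> i\<close> by (simp add: m_def)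
    have "(h^^m) ((h^^m) x) = (h^^(m + m)) x" by (simp add: funpow_add)
    also have "\<dots> = (h^^((m - i) + i + (i+1)*p)) x" by (simp only: mm)
    also have "\<dots> = (h^^((m - i) + i)) x" using multk x by blast
    also have "\<dots> = (h^^m) x" using \<open>m \<ge> i\<close> by simp
    finally show "(h^^m) ((h^^m) x) = (h^^m) x" .
  qed
  ultimately show ?thesis by blast
qed

lemma idem_pow_stable:
  assumes "\<forall>x\<in>A. g x \<in> A" "\<forall>x\<in>A. g (g x) = g x"
  shows "x \<in> A \<Longrightarrow> (g^^Suc j) x = g x"
proof (induction j)
  case 0 then show ?case by simp
next
  case (Suc j)
  then show ?case using assms by simp
qed

lemma idem_mult:
  assumes "\<forall>x\<in>A. h x \<in> A" "\<forall>x\<in>A. (h^^m) ((h^^m) x) = (h^^m) x" "k > 0" "x \<in> A"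
  shows "(h^^(m * k)) x = (h^^m) x"
proof -
  have mapsto: "\<forall>x\<in>A. (h^^n) x \<in> A" for n
    by (induction n) (use assms(1) in auto)
  obtain j where k: "k = Suc j" using assms(3) by (cases k) auto
  have "(h^^(m * k)) x = ((h^^m)^^k) x" by (simp add: funpow_mult)
  also have "\<dots> = (h^^m) x" unfolding k
    using idem_pow_stable[of A "h^^m"] mapsto assms(2,4) by blast
  finally show ?thesis .
qed

lemma endo_bij:
  assumes fin: "finite (verts R)" "finite (edges R)" and pr: "pruned R"
    and hm: "tree_morphism R R h he"
  shows "bij_betw h (verts R) (verts R)" "bij_betw he (edges R) (edges R)"
proof -
  have hV: "\<forall>x\<in>verts R. h x \<in> verts R" and hE: "\<forall>x\<in>edges R. he x \<in> edges R"
    using hm unfolding tree_morphism_def by auto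
  obtain m1 where m1: "m1 > 0" "\<forall>x\<in>verts R. (h^^m1) ((h^^m1) x) = (h^^m1) x"
    using idem_pow[OF fin(1) hV] by blast
  obtain m2 where m2: "m2 > 0" "\<forall>x\<in>edges R. (he^^m2) ((he^^m2) x) = (he^^m2) x"
    using idem_pow[OF fin(2) hE] by blast
  have mapV: "\<forall>x\<in>verts R. (h^^n) x \<in> verts R" for n
    by (induction n) (use hV in auto)
  have mapE: "\<forall>x\<in>edges R. (he^^n) x \<in> edges R" for n
    by (induction n) (use hE in auto)
  define m where "m = m1 * m2"
  have m0: "m > 0" using m1 m2 by (simp add: m_def)
  have gV: "(h^^m) x = (h^^m1) x" if "x \<in> verts R" for x
    using idem_mult[OF hV m1(2) m2(1) that] by (simp add: m_def)
  have gE: "(he^^m) x = (he^^m2) x" if "x \<in> edges R" for x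
    using idem_mult[OF hE m2(2) m1(1) that] by (simp add: m_def mult.commute)
  have "retraction R (h^^m) (he^^m)"
    unfolding retraction_def
  proof (intro conjI ballI)
    show "tree_morphism R R (h^^m) (he^^m)" using morph_pow[OF hm] .
    fix v assume v: "v \<in> verts R"
    show "(h^^m) ((h^^m) v) = (h^^m) v" using gV v mapV m1(2) by simp
  next
    fix e assume e: "e \<in> edges R"
    show "(he^^m) ((he^^m) e) = (he^^m) e" using gE e mapE m2(2) by simp
  qed
  hence idV: "\<forall>v\<in>verts R. (h^^m) v = v" and idE: "\<forall>e\<in>edges R. (he^^m) e = e"
    using pr unfolding pruned_def by blast+
  obtain k where k: "m = Suc k" using m0 by (cases m) auto
  have "inj_on h (verts R)"
  proof (rule inj_onI)
    fix x y assume "x \<in> verts R" "y \<in> verts R" "h x = h y"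
    hence "(h^^m) x = (h^^m) y" unfolding k by (simp add: funpow_Suc_right del: funpow.simps)
    thus "x = y" using idV \<open>x \<in> verts R\<close> \<open>y \<in> verts R\<close> by simp
  qed
  moreover have "inj_on he (edges R)"
  proof (rule inj_onI)
    fix x y assume "x \<in> edges R" "y \<in> edges R" "he x = he y"
    hence "(he^^m) x = (he^^m) y" unfolding k by (simp add: funpow_Suc_right del: funpow.simps)
    thus "x = y" using idE \<open>x \<in> edges R\<close> \<open>y \<in> edges R\<close> by simp
  qed
  moreover have "h ` verts R \<subseteq> verts R" "he ` edges R \<subseteq> edges R" using hV hE by auto
  ultimately show "bij_betw h (verts R) (verts R)" "bij_betw he (edges R) (edges R)"
    using endo_inj_surj[OF fin(1)] endo_inj_surj[OF fin(2)]
    by (simp_all add: bij_betw_def)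
qed

lemma retr_finite:
  assumes "sigma_tree \<Sigma> X"
  shows "finite (verts (image_sub X f e))" "finite (edges (image_sub X f e))"
  using assms by (auto simp: sigma_tree_def wf_sgraph_def)

lemma uniq:
  assumes X: "sigma_tree \<Sigma> X" and r1: "retraction X f1 e1" and r2: "retraction X f2 e2"
    and p1: "pruned (image_sub X f1 e1)" and p2: "pruned (image_sub X f2 e2)"
  shows "isomorphic (image_sub X f1 e1) (image_sub X f2 e2)"
proof -
  let ?R1 = "image_sub X f1 e1" and ?R2 = "image_sub X f2 e2"
  have a: "tree_morphism ?R1 ?R2 f2 e2" using morph_img[OF r1 r2] .
  have b: "tree_morphism ?R2 ?R1 f1 e1" using morph_img[OF r2 r1] .
  have ba: "bij_betw (f1 \<circ> f2) (verts ?R1) (verts ?R1)" "bij_betw (e1 \<circ> e2) (edges ?R1) (edges ?R1)"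
    using endo_bij[OF retr_finite(1)[OF X] retr_finite(2)[OF X] p1 morph_comp[OF a b]] by auto
  have ab: "bij_betw (f2 \<circ> f1) (verts ?R2) (verts ?R2)" "bij_betw (e2 \<circ> e1) (edges ?R2) (edges ?R2)"
    using endo_bij[OF retr_finite(1)[OF X] retr_finite(2)[OF X] p2 morph_comp[OF b a]] by auto
  have aV: "f2 ` verts ?R1 \<subseteq> verts ?R2" and aE: "e2 ` edges ?R1 \<subseteq> edges ?R2"
    and bV: "f1 ` verts ?R2 \<subseteq> verts ?R1" and bE: "e1 ` edges ?R2 \<subseteq> edges ?R1"
    using a b unfolding tree_morphism_def by blast+
  have "bij_betw f2 (verts ?R1) (verts ?R2)"
  proof -
    have "inj_on f2 (verts ?R1)" using ba(1) inj_on_imageI2 unfolding bij_betw_def by blast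
    moreover have "verts ?R2 \<subseteq> f2 ` verts ?R1"
    proof -
      have "verts ?R2 = (f2 \<circ> f1) ` verts ?R2" using ab(1) unfolding bij_betw_def by simp
      also have "\<dots> \<subseteq> f2 ` verts ?R1" using bV by (auto simp: image_comp[symmetric])
      finally show ?thesis .
    qed
    ultimately show ?thesis using aV unfolding bij_betw_def by blast
  qed
  moreover have "bij_betw e2 (edges ?R1) (edges ?R2)"
  proof -
    have "inj_on e2 (edges ?R1)" using ba(2) inj_on_imageI2 unfolding bij_betw_def by blast
    moreover have "edges ?R2 \<subseteq> e2 ` edges ?R1"
    proof -
      have "edges ?R2 = (e2 \<circ> e1) ` edges ?R2" using ab(2) unfolding bij_betw_def by simp
      also have "\<dots> \<subseteq> e2 ` edges ?R1" using bE by (auto simp: image_comp[symmetric])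
      finally show ?thesis .
    qed
    ultimately show ?thesis using aE unfolding bij_betw_def by blast
  qed
  ultimately show ?thesis using a unfolding isomorphic_def tree_iso_def by blast
qed

lemma retr_sigma:
  assumes X: "sigma_tree \<Sigma> X" and r: "retraction X f e"
  shows "sigma_tree \<Sigma> (image_sub X f e)"
proof -
  let ?R = "image_sub X f e"
  have tm: "tree_morphism X ?R f e" using morph_to_img[OF r] .
  have fs: "f (start X) = start X" "f (fin X) = fin X" using r unfolding retraction_def tree_morphism_def by auto
  have sub: "f ` verts X \<subseteq> verts X" "e ` edges X \<subseteq> edges X" using retr_img_sub[OF r] .
  have wfX: "wf_sgraph X" using X unfolding sigma_tree_def by blast
  have wf: "wf_sgraph ?R"
    unfolding wf_sgraph_def
  proof (intro conjI ballI)
    show "finite (verts ?R)" "finite (edges ?R)" using wfX unfolding wf_sgraph_def by simp_all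
    show "start ?R \<in> verts ?R" using tm unfolding tree_morphism_def wf_sgraph_def
      using wfX unfolding wf_sgraph_def by (metis image_sub_simps(6) tree_morphism_def)
    show "fin ?R \<in> verts ?R" using tm wfX unfolding wf_sgraph_def
      by (metis image_sub_simps(7) tree_morphism_def)
  next
    fix ed assume "ed \<in> edges ?R"
    then show "src ?R ed \<in> verts ?R" "tgt ?R ed \<in> verts ?R"
      using r wfX unfolding retraction_def tree_morphism_def wf_sgraph_def by auto
  qed
  have ne: "verts ?R \<noteq> {}" using X by (auto simp: sigma_tree_def underlying_tree_def)
  have conn: "\<forall>u\<in>verts ?R. \<forall>v\<in>verts ?R. \<exists>es. uwalk ?R u es v"
  proof (intro ballI)
    fix u v assume "u \<in> verts ?R" "v \<in> verts ?R"
    then obtain u' v' where uv: "u' \<in> verts X" "v' \<in> verts X" "u = f u'" "v = f v'" by auto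
    have "\<forall>u\<in>verts X. \<forall>v\<in>verts X. \<exists>es. uwalk X u es v"
      using X unfolding sigma_tree_def underlying_tree_def by blast
    then obtain es where "uwalk X u' es v'" using uv by blast
    hence "uwalk ?R (f u') (map e es) (f v')" by (rule uwalk_map[OF tm])
    thus "\<exists>es. uwalk ?R u es v" using uv by blast
  qed
  have acyc: "\<not> (\<exists>u es. es \<noteq> [] \<and> distinct es \<and> uwalk ?R u es u)"
  proof
    assume "\<exists>u es. es \<noteq> [] \<and> distinct es \<and> uwalk ?R u es u"
    then obtain u es where "es \<noteq> []" "distinct es" "uwalk ?R u es u" by blast
    hence "es \<noteq> [] \<and> distinct es \<and> uwalk X u es u" using uwalk_sub[OF r] by blast
    moreover have "\<not> (\<exists>u es. es \<noteq> [] \<and> distinct es \<and> uwalk X u es u)"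
      using X unfolding sigma_tree_def underlying_tree_def by blast
    ultimately show False by blast
  qed
  have labs: "lab ?R ` edges ?R \<subseteq> \<Sigma>"
  proof -
    have "lab X ` edges X \<subseteq> \<Sigma>" using X unfolding sigma_tree_def by blast
    thus ?thesis using sub by (auto simp: image_subset_iff)
  qed
  obtain es where "dwalk X (start X) es (fin X)" using X unfolding sigma_tree_def by blast
  hence "dwalk ?R (start ?R) (map e es) (fin ?R)" using dwalk_map[OF tm] fs by fastforce
  hence "\<exists>es. dwalk ?R (start ?R) es (fin ?R)" by blast
  moreover have "underlying_tree ?R" unfolding underlying_tree_def using ne conn acyc by blast
  ultimately show ?thesis using wf labs unfolding sigma_tree_def by blast
qed

lemma exist:
  fixes X :: "('v, 'e, 's) sgraph"
  assumes X: "sigma_tree \<Sigma> X"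
  shows "\<exists>R. is_retract R X \<and> sigma_tree \<Sigma> R \<and> pruned R"
proof -
  define P where "P = (\<lambda>p::('v \<Rightarrow> 'v) \<times> ('e \<Rightarrow> 'e). retraction X (fst p) (snd p))"
  define \<mu> where "\<mu> = (\<lambda>p::('v \<Rightarrow> 'v) \<times> ('e \<Rightarrow> 'e). card (fst p ` verts X) + card (snd p ` edges X))"
  have "P (id, id)" unfolding P_def retraction_def tree_morphism_def by simp
  then obtain fe where fe: "P fe" "\<forall>y. P y \<longrightarrow> \<mu> fe \<le> \<mu> y"
    using ex_has_least_nat[of P "(id,id)" \<mu>] by blast
  obtain f e where fe': "fe = (f, e)" by (cases fe)
  have r: "retraction X f e" using fe fe' P_def by simp
  have min: "card (f ` verts X) + card (e ` edges X) \<le> card (g ` verts X) + card (ge ` edges X)"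
    if "retraction X g ge" for g ge
    using fe(2) that unfolding fe' P_def \<mu>_def by force
  have finV: "finite (verts X)" and finE: "finite (edges X)"
    using X by (auto simp: sigma_tree_def wf_sgraph_def)
  let ?R = "image_sub X f e"
  have "pruned ?R"
    unfolding pruned_def
  proof (intro allI impI)
    fix g ge assume rg: "retraction ?R g ge"
    have gm: "tree_morphism X X (g \<circ> f) (ge \<circ> e)"
      using morph_from_img[OF morph_comp[OF morph_to_img[OF r]] r] rg
      unfolding retraction_def by blast
    have gV: "g ` f ` verts X \<subseteq> f ` verts X" and gE: "ge ` e ` edges X \<subseteq> e ` edges X"
      using rg unfolding retraction_def tree_morphism_def by auto
    have "retraction X (g \<circ> f) (ge \<circ> e)"
      unfolding retraction_def
    proof (intro conjI ballI gm)
      fix v assume v: "v \<in> verts X"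
      have "g (f v) \<in> f ` verts X" using gV v by blast
      hence "f (g (f v)) = g (f v)" using retr_fix(1)[OF r] by blast
      thus "(g \<circ> f) ((g \<circ> f) v) = (g \<circ> f) v" using rg v unfolding retraction_def by simp
    next
      fix ed assume ed: "ed \<in> edges X"
      have "ge (e ed) \<in> e ` edges X" using gE ed by blast
      hence "e (ge (e ed)) = ge (e ed)" using retr_fix(2)[OF r] by blast
      thus "(ge \<circ> e) ((ge \<circ> e) ed) = (ge \<circ> e) ed" using rg ed unfolding retraction_def by simp
    qed
    hence m: "card (f ` verts X) + card (e ` edges X) \<le> card (g ` f ` verts X) + card (ge ` e ` edges X)"
      using min[of "g \<circ> f" "ge \<circ> e"] by (simp add: image_comp)
    have gid: "\<forall>v\<in>f ` verts X. g (g v) = g v" and geid: "\<forall>v\<in>e ` edges X. ge (ge v) = ge v"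
      using rg unfolding retraction_def by simp_all
    have c1: "card (g ` f ` verts X) \<le> card (f ` verts X)" using gV finV by (simp add: card_mono)
    have c2: "card (ge ` e ` edges X) \<le> card (e ` edges X)" using gE finE by (simp add: card_mono)
    show "(\<forall>v\<in>verts ?R. g v = v) \<and> (\<forall>ed\<in>edges ?R. ge ed = ed)"
    proof (rule ccontr)
      assume "\<not> ?thesis"
      then consider v where "v \<in> f ` verts X" "g v \<noteq> v" | ed where "ed \<in> e ` edges X" "ge ed \<noteq> ed"
        by auto
      then show False
      proof cases
        case 1
        have "v \<notin> g ` f ` verts X"
        proof
          assume "v \<in> g ` f ` verts X"
          then obtain w where "w \<in> f ` verts X" "v = g w" by blast
          thus False using gid 1 by metis
        qed
        hence "g ` f ` verts X \<subset> f ` verts X" using gV 1 by blast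
        hence "card (g ` f ` verts X) < card (f ` verts X)" using finV by (simp add: psubset_card_mono)
        thus False using m c2 by linarith
      next
        case 2
        have "ed \<notin> ge ` e ` edges X"
        proof
          assume "ed \<in> ge ` e ` edges X"
          then obtain w where "w \<in> e ` edges X" "ed = ge w" by blast
          thus False using geid 2 by metis
        qed
        hence "ge ` e ` edges X \<subset> e ` edges X" using gE 2 by blast
        hence "card (ge ` e ` edges X) < card (e ` edges X)" using finE by (simp add: psubset_card_mono)
        thus False using m c1 by linarith
      qed
    qed
  qed
  moreover have "is_retract ?R X" using r unfolding is_retract_def by blast
  ultimately show ?thesis using retr_sigma[OF X r] by blast
qed

theorem proposition3p5:
  fixes \<Sigma> :: "'s set" and X :: "('v, 'e, 's) sgraph"
  assumes "sigma_tree \<Sigma> X"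
  shows "(\<exists>R. is_retract R X \<and> sigma_tree \<Sigma> R \<and> pruned R)
       \<and> (\<forall>R1 R2. is_retract R1 X \<and> pruned R1 \<and> is_retract R2 X \<and> pruned R2
            \<longrightarrow> isomorphic R1 R2)"
proof (intro conjI allI impI)
  show "\<exists>R. is_retract R X \<and> sigma_tree \<Sigma> R \<and> pruned R" using exist[OF assms] .
  fix R1 R2 :: "('v, 'e, 's) sgraph"
  assume h: "is_retract R1 X \<and> pruned R1 \<and> is_retract R2 X \<and> pruned R2"
  then obtain f1 e1 f2 e2 where "retraction X f1 e1" "R1 = image_sub X f1 e1"
    "retraction X f2 e2" "R2 = image_sub X f2 e2" unfolding is_retract_def by blast
  then show "isomorphic R1 R2" using uniq[OF assms] h by simp
qed

end
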